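(* Let $(\mathscr{P},\mathscr{B},\mathrm{I})$ be a linear space with incidence graph $\Gamma$, let $\varphi$ be a gain function on $\Gamma$ with gain group $G$ acting on the left on a nonempty set $\Lambda$. Then $\mathfrak{M}(\Gamma,\varphi)$ is a generalized quadrangle if and only if for every $p\in\mathscr{P}$ and $b\in\mathscr{B}$ with $p$ not incident with $b$, and every $\lambda\in\Lambda$, the function $\rho_{b,p,\lambda}:\mathscr{P}_b\to\Lambda$ is bijective. Moreover, when $\mathfrak{M}(\Gamma,\varphi)$ is a generalized quadrangle: (1) the set $X=\{x_p : p\in\mathscr{P}\}$ is an ovoid of $\mathfrak{M}(\Gamma,\varphi)$; (2) for every $b\in\mathscr{B}$ the set $\mathscr{P}_b$ has the same cardinality as $\Lambda$; hence $(\mathscr{P},\mathscr{B},\mathrm{I})$ is a Steiner system; (3) if $\mathscr{P}$ is finite, then $\Lambda$ is finite, $|\mathscr{P}|=v\ge 3$, $|\Lambda|=k\ge 2$, and in $\mathfrak{M}(\Gamma,\varphi)$ every line is incident with exactly $1+s$ points and every point is incident with exactly $1+t$ lines, where $s=\frac{v-1}{k-1}$ and $t=k-1$.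
   Context: An incidence structure is a triple $(\mathscr{P},\mathscr{B},\mathrm{I})$ where $\mathscr{P}$ (points) and $\mathscr{B}$ (lines) are nonempty disjoint sets and $\mathrm{I}\subseteq\mathscr{P}\times\mathscr{B}$ is a nonempty incidence relation; write $p\ \mathrm{I}\ b$ or $b\ \mathrm{I}\ p$ when $(p,b)\in\mathrm{I}$, and $\mathscr{P}_b=\{q\in\mathscr{P}: q\ \mathrm{I}\ b\}$. It is a linear space if any two distinct points are incident with exactly one common line, each line is incident with at least two points, and some point and line are not incident. A linear space is a Steiner system if all sets $\mathscr{P}_b$ have the same (possibly infinite) cardinality. The incidence graph $\Gamma$ is the bipartite graph with vertex set $\mathscr{P}\cup\mathscr{B}$ and an edge $bp$ for each incident pair; every edge is oriented from its line to its point. A gain function with gain group $G$ assigns to each edge $e$ an element $\varphi(e)\in G$ (extended to the free group on edges, so $\varphi(e^{-1})=\varphi(e)^{-1}$). For a walk $w=(u_0,e_1,u_1,\dots,e_n,u_n)$ in $\Gamma$, $\varphi_w=\varphi(e_n)^{\delta_n}\cdots\varphi(e_1)^{\delta_1}$ with $\delta_i=1$ if $e_i$ is oriented from $u_{i-1}$ to $u_i$ and $\delta_i=-1$ otherwise. For $b\in\mathscr{B}$, $p\in\mathscr{P}$ with $p$ not incident with $b$, define $\rho_{b,p}:\mathscr{P}_b\to G$ by $\rho_{b,p}(q)=\varphi_w$ where $w=(b,e_1,q,e_2,b',e_3,p)$ and $b'$ is the unique line incident with $p$ and $q$ (so $\rho_{b,p}(q)=\varphi(b'p)\varphi(b'q)^{-1}\varphi(bq)$);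 and for $\lambda\in\Lambda$ define $\rho_{b,p,\lambda}(q)=\rho_{b,p}(q)\cdot\lambda$. Construction $\mathfrak{M}(\Gamma,\varphi)$: the incidence structure whose points are the formal symbols $x_p$ ($p\in\mathscr{P}$) and $y_{b,\lambda}$ ($b\in\mathscr{B},\lambda\in\Lambda$), whose lines are the formal symbols $z_{p,\lambda}$ ($p\in\mathscr{P},\lambda\in\Lambda$), and whose incidences are exactly: $x_p$ incident with $z_{p,\lambda}$ for all $\lambda$, and $y_{b,\lambda}$ incident with $z_{p,\mu}$ whenever $b\ \mathrm{I}\ p$ and $\mu=\varphi(bp)\cdot\lambda$. A $k$-chain is a sequence $(u_0,\dots,u_k)$ of elements with $u_i$ incident with $u_{i-1}$; $d(u,v)$ is the least $k$ admitting a $k$-chain from $u$ to $v$. A generalized quadrangle is an incidence structure with $d(u,v)\le 4$ for all $u,v$ and a unique $k$-chain from $u$ to $v$ whenever $d(u,v)=k<4$. An ovoid of a generalized quadrangle is a set $O$ of points such that each line is incident with exactly one point of $O$. *)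

theory Defs
  imports Complex_Main "HOL-Algebra.Group_Action" "HOL-Library.Equipollence"
begin

text \<open>An incidence structure is given by a point set Pts, a line set Lns (of different
  HOL types, hence disjoint) and an incidence relation Inc of (point, line) pairs.\<close>

definition incidence_structure :: "'p set \<Rightarrow> 'b set \<Rightarrow> ('p \<times> 'b) set \<Rightarrow> bool" where
  "incidence_structure Pts Lns Inc \<longleftrightarrow>
     Pts \<noteq> {} \<and> Lns \<noteq> {} \<and> Inc \<noteq> {} \<and> Inc \<subseteq> Pts \<times> Lns"

definition pts_on :: "'p set \<Rightarrow> ('p \<times> 'b) set \<Rightarrow> 'b \<Rightarrow> 'p set" where
  "pts_on Pts Inc b = {q \<in> Pts. (q, b) \<in> Inc}"

definition linear_space :: "'p set \<Rightarrow> 'b set \<Rightarrow> ('p \<times> 'b) set \<Rightarrow> bool" where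
  "linear_space Pts Lns Inc \<longleftrightarrow>
     incidence_structure Pts Lns Inc \<and>
     (\<forall>p\<in>Pts. \<forall>q\<in>Pts. p \<noteq> q \<longrightarrow> (\<exists>!b. b \<in> Lns \<and> (p, b) \<in> Inc \<and> (q, b) \<in> Inc)) \<and>
     (\<forall>b\<in>Lns. \<exists>p\<in>Pts. \<exists>q\<in>Pts. p \<noteq> q \<and> (p, b) \<in> Inc \<and> (q, b) \<in> Inc) \<and>
     (\<exists>p\<in>Pts. \<exists>b\<in>Lns. (p, b) \<notin> Inc)"

definition steiner_system :: "'p set \<Rightarrow> 'b set \<Rightarrow> ('p \<times> 'b) set \<Rightarrow> bool" where
  "steiner_system Pts Lns Inc \<longleftrightarrow>
     linear_space Pts Lns Inc \<and>
     (\<forall>b\<in>Lns. \<forall>b'\<in>Lns. pts_on Pts Inc b \<approx> pts_on Pts Inc b')"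

fun einc :: "('p \<times> 'b) set \<Rightarrow> 'p + 'b \<Rightarrow> 'p + 'b \<Rightarrow> bool" where
  "einc Inc (Inl p) (Inr b) = ((p, b) \<in> Inc)"
| "einc Inc (Inr b) (Inl p) = ((p, b) \<in> Inc)"
| "einc Inc _ _ = False"

definition elems :: "'p set \<Rightarrow> 'b set \<Rightarrow> ('p + 'b) set" where
  "elems Pts Lns = Inl ` Pts \<union> Inr ` Lns"

definition is_chain :: "'p set \<Rightarrow> 'b set \<Rightarrow> ('p \<times> 'b) set \<Rightarrow> nat \<Rightarrow> 'p + 'b \<Rightarrow> 'p + 'b
    \<Rightarrow> ('p + 'b) list \<Rightarrow> bool" where
  "is_chain Pts Lns Inc k u v cs \<longleftrightarrow>
     length cs = Suc k \<and> set cs \<subseteq> elems Pts Lns \<and> cs ! 0 = u \<and> cs ! k = v \<and>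
     (\<forall>i. 0 < i \<and> i \<le> k \<longrightarrow> einc Inc (cs ! i) (cs ! (i - 1)))"

definition inc_dist :: "'p set \<Rightarrow> 'b set \<Rightarrow> ('p \<times> 'b) set \<Rightarrow> 'p + 'b \<Rightarrow> 'p + 'b \<Rightarrow> nat" where
  "inc_dist Pts Lns Inc u v = (LEAST k. \<exists>cs. is_chain Pts Lns Inc k u v cs)"

definition generalized_quadrangle :: "'p set \<Rightarrow> 'b set \<Rightarrow> ('p \<times> 'b) set \<Rightarrow> bool" where
  "generalized_quadrangle Pts Lns Inc \<longleftrightarrow>
     incidence_structure Pts Lns Inc \<and>
     (\<forall>u\<in>elems Pts Lns. \<forall>v\<in>elems Pts Lns.
        (\<exists>k\<le>4. \<exists>cs. is_chain Pts Lns Inc k u v cs) \<and>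
        (\<forall>k<4. inc_dist Pts Lns Inc u v = k \<longrightarrow> (\<exists>!cs. is_chain Pts Lns Inc k u v cs)))"

definition ovoid :: "'p set \<Rightarrow> 'b set \<Rightarrow> ('p \<times> 'b) set \<Rightarrow> 'p set \<Rightarrow> bool" where
  "ovoid Pts Lns Inc Ov \<longleftrightarrow> Ov \<subseteq> Pts \<and> (\<forall>b\<in>Lns. \<exists>!p. p \<in> Ov \<and> (p, b) \<in> Inc)"

text \<open>A gain function assigns to each edge bp (i.e. incident pair (p,b)) a group element
  phi p b. The unique line through two distinct points:\<close>

definition join :: "'b set \<Rightarrow> ('p \<times> 'b) set \<Rightarrow> 'p \<Rightarrow> 'p \<Rightarrow> 'b" where
  "join Lns Inc p q = (THE b. b \<in> Lns \<and> (p, b) \<in> Inc \<and> (q, b) \<in> Inc)"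

definition rho :: "('g, 'm) monoid_scheme \<Rightarrow> 'b set \<Rightarrow> ('p \<times> 'b) set \<Rightarrow> ('p \<Rightarrow> 'b \<Rightarrow> 'g)
    \<Rightarrow> 'b \<Rightarrow> 'p \<Rightarrow> 'p \<Rightarrow> 'g" where
  "rho G Lns Inc \<phi> b p q =
     (let b' = join Lns Inc p q in \<phi> p b' \<otimes>\<^bsub>G\<^esub> inv\<^bsub>G\<^esub> (\<phi> q b') \<otimes>\<^bsub>G\<^esub> \<phi> q b)"

definition rho_lam :: "('g, 'm) monoid_scheme \<Rightarrow> 'b set \<Rightarrow> ('p \<times> 'b) set \<Rightarrow> ('p \<Rightarrow> 'b \<Rightarrow> 'g)
    \<Rightarrow> ('g \<Rightarrow> 'l \<Rightarrow> 'l) \<Rightarrow> 'b \<Rightarrow> 'p \<Rightarrow> 'l \<Rightarrow> 'p \<Rightarrow> 'l" where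
  "rho_lam G Lns Inc \<phi> act b p lm q = act (rho G Lns Inc \<phi> b p q) lm"

datatype ('p, 'b, 'l) mpoint = XP 'p | YP 'b 'l

text \<open>Lines of M are the symbols z_{p,lambda}, represented as pairs (p, lambda).\<close>

definition M_points :: "'p set \<Rightarrow> 'b set \<Rightarrow> 'l set \<Rightarrow> ('p, 'b, 'l) mpoint set" where
  "M_points Pts Lns Lam = XP ` Pts \<union> {YP b lm | b lm. b \<in> Lns \<and> lm \<in> Lam}"

definition M_lines :: "'p set \<Rightarrow> 'l set \<Rightarrow> ('p \<times> 'l) set" where
  "M_lines Pts Lam = Pts \<times> Lam"

definition M_inc :: "'p set \<Rightarrow> 'b set \<Rightarrow> ('p \<times> 'b) set \<Rightarrow> 'l set \<Rightarrow> ('p \<Rightarrow> 'b \<Rightarrow> 'g)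
    \<Rightarrow> ('g \<Rightarrow> 'l \<Rightarrow> 'l) \<Rightarrow> (('p, 'b, 'l) mpoint \<times> ('p \<times> 'l)) set" where
  "M_inc Pts Lns Inc Lam \<phi> act =
     {(XP p, (p, \<mu>)) | p \<mu>. p \<in> Pts \<and> \<mu> \<in> Lam} \<union>
     {(YP b lm, (p, \<mu>)) | b lm p \<mu>. b \<in> Lns \<and> lm \<in> Lam \<and> (p, b) \<in> Inc \<and> \<mu> = act (\<phi> p b) lm}"

end

theory Submission imports Defs begin

lemma einc_Inl2[simp]: "einc I a (Inl x) = (\<exists>M. a = Inr M \<and> (x,M) \<in> I)"
  by (cases a) auto
lemma einc_Inr2[simp]: "einc I a (Inr M) = (\<exists>x. a = Inl x \<and> (x,M) \<in> I)"
  by (cases a) auto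
lemma elems_Inl[simp]: "Inl x \<in> elems P L \<longleftrightarrow> x \<in> P"
  by (auto simp: elems_def)
lemma elems_Inr[simp]: "Inr x \<in> elems P L \<longleftrightarrow> x \<in> L"
  by (auto simp: elems_def)

lemma chain0: "is_chain P L I 0 u v cs \<longleftrightarrow> cs = [u] \<and> u = v \<and> u \<in> elems P L"
  unfolding is_chain_def by (auto simp: length_Suc_conv)

lemma chain_Suc: "is_chain P L I (Suc k) u v cs \<longleftrightarrow>
   (\<exists>a cs'. cs = u # cs' \<and> u \<in> elems P L \<and> einc I a u \<and> is_chain P L I k a v cs')"
proof
  assume h: "is_chain P L I (Suc k) u v cs"
  then obtain w cs' where cs: "cs = w # cs'" unfolding is_chain_def by (cases cs) auto
  have w: "w = u" using h cs unfolding is_chain_def by auto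
  have e1: "einc I (cs!1) (cs!0)" using h unfolding is_chain_def by auto
  have "is_chain P L I k (cs'!0) v cs'"
    unfolding is_chain_def
  proof (intro conjI allI impI)
    show "length cs' = Suc k" using h cs unfolding is_chain_def by auto
    show "set cs' \<subseteq> elems P L" using h cs unfolding is_chain_def by auto
    show "cs' ! 0 = cs' ! 0" by simp
    show "cs' ! k = v" using h cs unfolding is_chain_def by auto
    fix i assume i: "0 < i \<and> i \<le> k"
    have "einc I (cs ! Suc i) (cs ! (Suc i - 1))" using h i unfolding is_chain_def by auto
    then show "einc I (cs' ! i) (cs' ! (i - 1))" using cs i by (cases i) auto
  qed
  then show "\<exists>a cs'. cs = u # cs' \<and> u \<in> elems P L \<and> einc I a u \<and> is_chain P L I k a v cs'"
    using cs w e1 h unfolding is_chain_def by auto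
next
  assume "\<exists>a cs'. cs = u # cs' \<and> u \<in> elems P L \<and> einc I a u \<and> is_chain P L I k a v cs'"
  then obtain a cs' where cs: "cs = u # cs'" and u: "u \<in> elems P L" and e: "einc I a u"
    and c: "is_chain P L I k a v cs'" by blast
  show "is_chain P L I (Suc k) u v cs"
    unfolding is_chain_def
  proof (intro conjI allI impI)
    show "length cs = Suc (Suc k)" using c cs unfolding is_chain_def by auto
    show "set cs \<subseteq> elems P L" using c cs u unfolding is_chain_def by auto
    show "cs ! 0 = u" using cs by simp
    show "cs ! Suc k = v" using c cs unfolding is_chain_def by auto
    fix i assume i: "0 < i \<and> i \<le> Suc k"
    show "einc I (cs ! i) (cs ! (i - 1))"
    proof (cases "i = 1")
      case True then show ?thesis using cs e c unfolding is_chain_def by auto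
    next
      case False
      then obtain j where j: "i = Suc j" "0 < j" "j \<le> k" using i by (cases i) auto
      then show ?thesis using cs c unfolding is_chain_def by (cases j) auto
    qed
  qed
qed

lemma chain1: "is_chain P L I 1 u v cs \<longleftrightarrow> cs = [u,v] \<and> u \<in> elems P L \<and> v \<in> elems P L \<and> einc I v u"
  by (auto simp: chain_Suc chain0)

lemma chain1'[simp]: "is_chain P L I (Suc 0) u v cs \<longleftrightarrow> cs = [u,v] \<and> u \<in> elems P L \<and> v \<in> elems P L \<and> einc I v u"
  using chain1 by simp

lemma chain2: "is_chain P L I 2 u v cs \<longleftrightarrow> (\<exists>a. cs = [u,a,v] \<and> u \<in> elems P L \<and> a \<in> elems P L
   \<and> v \<in> elems P L \<and> einc I a u \<and> einc I v a)"
  by (auto simp: numeral_eq_Suc chain_Suc chain0)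

lemma chain3: "is_chain P L I 3 u v cs \<longleftrightarrow> (\<exists>a b. cs = [u,a,b,v] \<and> u \<in> elems P L \<and> a \<in> elems P L
   \<and> b \<in> elems P L \<and> v \<in> elems P L \<and> einc I a u \<and> einc I b a \<and> einc I v b)"
  by (auto simp: numeral_eq_Suc chain_Suc chain0)

lemma chain4: "is_chain P L I 4 u v cs \<longleftrightarrow> (\<exists>a b c. cs = [u,a,b,c,v] \<and> u \<in> elems P L \<and> a \<in> elems P L
   \<and> b \<in> elems P L \<and> c \<in> elems P L \<and> v \<in> elems P L \<and> einc I a u \<and> einc I b a \<and> einc I c b \<and> einc I v c)"
  by (auto simp: numeral_eq_Suc chain_Suc chain0)


lemma gq_B:
  assumes gq: "generalized_quadrangle P L I" and x: "x \<in> P" and N: "N \<in> L" and nI: "(x,N) \<notin> I"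
  shows "\<exists>M y. M \<in> L \<and> y \<in> P \<and> (x,M) \<in> I \<and> (y,M) \<in> I \<and> (y,N) \<in> I"
    and "\<And>M y M' y'. M \<in> L \<and> y \<in> P \<and> (x,M) \<in> I \<and> (y,M) \<in> I \<and> (y,N) \<in> I \<Longrightarrow>
          M' \<in> L \<and> y' \<in> P \<and> (x,M') \<in> I \<and> (y',M') \<in> I \<and> (y',N) \<in> I \<Longrightarrow> M = M' \<and> y = y'"
proof -
  have ue: "Inl x \<in> elems P L" "Inr N \<in> elems P L" using x N by auto
  obtain k cs where k: "k \<le> 4" and c: "is_chain P L I k (Inl x) (Inr N) cs"
    using gq ue unfolding generalized_quadrangle_def by blast
  have "k = 0 \<or> k = 1 \<or> k = 2 \<or> k = 3 \<or> k = 4" using k by arith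
  then have k3: "k = 3" using c nI by (auto simp: chain0 chain1 chain2 chain4)
  show ex: "\<exists>M y. M \<in> L \<and> y \<in> P \<and> (x,M) \<in> I \<and> (y,M) \<in> I \<and> (y,N) \<in> I"
    using c k3 by (force simp: chain3)
  have d: "inc_dist P L I (Inl x) (Inr N) = 3"
    unfolding inc_dist_def
  proof (rule Least_equality)
    show "\<exists>cs. is_chain P L I 3 (Inl x) (Inr N) cs" using c k3 by blast
    fix y assume "\<exists>cs. is_chain P L I y (Inl x) (Inr N) cs"
    then obtain cs where cy: "is_chain P L I y (Inl x) (Inr N) cs" by blast
    show "3 \<le> y"
    proof (rule ccontr)
      assume "\<not> 3 \<le> y"
      then have "y = 0 \<or> y = 1 \<or> y = 2" by arith
      then show False using cy nI by (auto simp: chain0 chain1 chain2)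
    qed
  qed
  have "inc_dist P L I (Inl x) (Inr N) < 4 \<longrightarrow>
     (\<exists>!cs. is_chain P L I (inc_dist P L I (Inl x) (Inr N)) (Inl x) (Inr N) cs)"
    using gq ue unfolding generalized_quadrangle_def by blast
  then have u: "\<exists>!cs. is_chain P L I 3 (Inl x) (Inr N) cs" using d by simp
  fix M y M' y'
  assume h1: "M \<in> L \<and> y \<in> P \<and> (x,M) \<in> I \<and> (y,M) \<in> I \<and> (y,N) \<in> I"
     and h2: "M' \<in> L \<and> y' \<in> P \<and> (x,M') \<in> I \<and> (y',M') \<in> I \<and> (y',N) \<in> I"
  have "is_chain P L I 3 (Inl x) (Inr N) [Inl x, Inr M, Inl y, Inr N]"
    using h1 x N by (auto simp: chain3)
  moreover have "is_chain P L I 3 (Inl x) (Inr N) [Inl x, Inr M', Inl y', Inr N]"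
    using h2 x N by (auto simp: chain3)
  ultimately show "M = M' \<and> y = y'" using u by auto
qed

lemma gq_intro:
  assumes inc: "incidence_structure P L I"
    and pl: "\<And>x. x \<in> P \<Longrightarrow> \<exists>M\<in>L. (x,M) \<in> I"
    and lp: "\<And>M. M \<in> L \<Longrightarrow> \<exists>x\<in>P. (x,M) \<in> I"
    and A: "\<And>x x' M M'. \<lbrakk>x \<in> P; x' \<in> P; M \<in> L; M' \<in> L; x \<noteq> x'; (x,M) \<in> I; (x',M) \<in> I;
             (x,M') \<in> I; (x',M') \<in> I\<rbrakk> \<Longrightarrow> M = M'"
    and Bex: "\<And>x N. \<lbrakk>x \<in> P; N \<in> L; (x,N) \<notin> I\<rbrakk> \<Longrightarrow>
              \<exists>M y. M \<in> L \<and> y \<in> P \<and> (x,M) \<in> I \<and> (y,M) \<in> I \<and> (y,N) \<in> I"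
    and Bun: "\<And>x N M y M' y'. \<lbrakk>x \<in> P; N \<in> L; (x,N) \<notin> I;
              M \<in> L \<and> y \<in> P \<and> (x,M) \<in> I \<and> (y,M) \<in> I \<and> (y,N) \<in> I;
              M' \<in> L \<and> y' \<in> P \<and> (x,M') \<in> I \<and> (y',M') \<in> I \<and> (y',N) \<in> I\<rbrakk> \<Longrightarrow> M = M' \<and> y = y'"
  shows "generalized_quadrangle P L I"
proof -
  have four: "(1::nat) \<le> 4" "(2::nat) \<le> 4" "(3::nat) \<le> 4" "(4::nat) \<le> 4" by auto
  have ex: "\<exists>k\<le>4. \<exists>cs. is_chain P L I k u v cs" if u: "u \<in> elems P L" and v: "v \<in> elems P L" for u v
  proof (cases u)
    case (Inl x)
    show ?thesis
    proof (cases v)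
      case (Inl x')
      obtain N where N: "N \<in> L" "(x',N) \<in> I" using pl[of x'] v Inl by auto
      show ?thesis
      proof (cases "(x,N) \<in> I")
        case True
        have "is_chain P L I 2 u v [Inl x, Inr N, Inl x']"
          using True N u v \<open>u = Inl x\<close> Inl by (auto simp: chain2)
        then show ?thesis using four by blast
      next
        case False
        then obtain M y where My: "M \<in> L \<and> y \<in> P \<and> (x,M) \<in> I \<and> (y,M) \<in> I \<and> (y,N) \<in> I"
          using Bex[of x N] N u \<open>u = Inl x\<close> by auto
        have "is_chain P L I 4 u v [Inl x, Inr M, Inl y, Inr N, Inl x']"
          using My N u v \<open>u = Inl x\<close> Inl by (auto simp: chain4)
        then show ?thesis using four by blast
      qed
    next
      case (Inr N)
      show ?thesis
      proof (cases "(x,N) \<in> I")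
        case True
        have "is_chain P L I 1 u v [Inl x, Inr N]"
          using True u v \<open>u = Inl x\<close> Inr by (auto simp: chain1)
        then show ?thesis using four by blast
      next
        case False
        then obtain M y where My: "M \<in> L \<and> y \<in> P \<and> (x,M) \<in> I \<and> (y,M) \<in> I \<and> (y,N) \<in> I"
          using Bex[of x N] u v \<open>u = Inl x\<close> Inr by auto
        have "is_chain P L I 3 u v [Inl x, Inr M, Inl y, Inr N]"
          using My u v \<open>u = Inl x\<close> Inr by (auto simp: chain3)
        then show ?thesis using four by blast
      qed
    qed
  next
    case (Inr N)
    show ?thesis
    proof (cases v)
      case (Inl x)
      show ?thesis
      proof (cases "(x,N) \<in> I")
        case True
        have "is_chain P L I 1 u v [Inr N, Inl x]"
          using True u v \<open>u = Inr N\<close> Inl by (auto simp: chain1)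
        then show ?thesis using four by blast
      next
        case False
        then obtain M y where My: "M \<in> L \<and> y \<in> P \<and> (x,M) \<in> I \<and> (y,M) \<in> I \<and> (y,N) \<in> I"
          using Bex[of x N] u v \<open>u = Inr N\<close> Inl by auto
        have "is_chain P L I 3 u v [Inr N, Inl y, Inr M, Inl x]"
          using My u v \<open>u = Inr N\<close> Inl by (auto simp: chain3)
        then show ?thesis using four by blast
      qed
    next
      case (Inr N')
      obtain y where y: "y \<in> P" "(y,N') \<in> I" using lp[of N'] v Inr by auto
      show ?thesis
      proof (cases "(y,N) \<in> I")
        case True
        have "is_chain P L I 2 u v [Inr N, Inl y, Inr N']"
          using True y u v \<open>u = Inr N\<close> Inr by (auto simp: chain2)
        then show ?thesis using four by blast
      next
        case False
        then obtain M z where Mz: "M \<in> L \<and> z \<in> P \<and> (y,M) \<in> I \<and> (z,M) \<in> I \<and> (z,N) \<in> I"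
          using Bex[of y N] y u \<open>u = Inr N\<close> by auto
        have "is_chain P L I 4 u v [Inr N, Inl z, Inr M, Inl y, Inr N']"
          using Mz y u v \<open>u = Inr N\<close> Inr by (auto simp: chain4)
        then show ?thesis using four by blast
      qed
    qed
  qed
  have un: "\<exists>!cs. is_chain P L I k u v cs"
    if u: "u \<in> elems P L" and v: "v \<in> elems P L" and k: "k < 4" and d: "inc_dist P L I u v = k" for u v k
  proof -
    have exk: "\<exists>cs. is_chain P L I k u v cs"
      using LeastI_ex[of "\<lambda>k. \<exists>cs. is_chain P L I k u v cs"] ex[OF u v] d
      unfolding inc_dist_def by blast
    have le: "k \<le> j" if "is_chain P L I j u v cs" for j cs
      using Least_le[of "\<lambda>k. \<exists>cs. is_chain P L I k u v cs" j] that d unfolding inc_dist_def by blast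
    have "k = 0 \<or> k = 1 \<or> k = 2 \<or> k = 3" using k by arith
    moreover have "cs1 = cs2" if "k = 2" "is_chain P L I k u v cs1" "is_chain P L I k u v cs2" for cs1 cs2
    proof -
      have uv: "u \<noteq> v" using le[of 0 "[u]"] u \<open>k = 2\<close> by (auto simp: chain0)
      have c1: "is_chain P L I 2 u v cs1" "is_chain P L I 2 u v cs2" using that by auto
      obtain a1 where a1: "cs1 = [u,a1,v]" "einc I a1 u" "einc I v a1" "a1 \<in> elems P L"
        using c1(1) unfolding chain2 by blast
      obtain a2 where a2: "cs2 = [u,a2,v]" "einc I a2 u" "einc I v a2" "a2 \<in> elems P L"
        using c1(2) unfolding chain2 by blast
      have "a1 = a2"
      proof (cases u)
        case (Inl x)
        then obtain M1 M2 where M: "a1 = Inr M1" "a2 = Inr M2" "(x,M1) \<in> I" "(x,M2) \<in> I"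
          using a1 a2 by auto
        then obtain x' where x': "v = Inl x'" "(x',M1) \<in> I" "(x',M2) \<in> I" using a1 a2 by auto
        show ?thesis using A[of x x' M1 M2] M x' Inl u v uv a1 a2 by auto
      next
        case (Inr N)
        then obtain y1 y2 where M: "a1 = Inl y1" "a2 = Inl y2" "(y1,N) \<in> I" "(y2,N) \<in> I"
          using a1 a2 by auto
        then obtain N' where x': "v = Inr N'" "(y1,N') \<in> I" "(y2,N') \<in> I" using a1 a2
          by (cases v) auto
        show ?thesis using A[of y1 y2 N N'] M x' Inr u v uv a1 a2 by auto
      qed
      then show ?thesis using a1 a2 by simp
    qed
    moreover have "cs1 = cs2" if "k = 3" "is_chain P L I k u v cs1" "is_chain P L I k u v cs2" for cs1 cs2
    proof -
      have ne: "\<not> einc I v u" using le[of 1 "[u,v]"] u v \<open>k = 3\<close> by (auto simp: chain1)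
      have c1: "is_chain P L I 3 u v cs1" "is_chain P L I 3 u v cs2" using that by auto
      obtain a1 b1 where a1: "cs1 = [u,a1,b1,v]" "einc I a1 u" "einc I b1 a1" "einc I v b1"
        "a1 \<in> elems P L" "b1 \<in> elems P L"
        using c1(1) unfolding chain3 by blast
      obtain a2 b2 where a2: "cs2 = [u,a2,b2,v]" "einc I a2 u" "einc I b2 a2" "einc I v b2"
        "a2 \<in> elems P L" "b2 \<in> elems P L"
        using c1(2) unfolding chain3 by blast
      have "a1 = a2 \<and> b1 = b2"
      proof (cases u)
        case (Inl x)
        then obtain M1 M2 where M: "a1 = Inr M1" "a2 = Inr M2" "(x,M1) \<in> I" "(x,M2) \<in> I"
          using a1 a2 by auto
        then obtain y1 y2 where y: "b1 = Inl y1" "b2 = Inl y2" "(y1,M1) \<in> I" "(y2,M2) \<in> I"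
          using a1 a2 by auto
        then obtain N where N: "v = Inr N" "(y1,N) \<in> I" "(y2,N) \<in> I" using a1 a2 by auto
        have "(x,N) \<notin> I" using ne N Inl by auto
        then show ?thesis using Bun[of x N M1 y1 M2 y2] M y N Inl u v a1 a2 by auto
      next
        case (Inr N)
        then obtain y1 y2 where M: "a1 = Inl y1" "a2 = Inl y2" "(y1,N) \<in> I" "(y2,N) \<in> I"
          using a1 a2 by auto
        then obtain M1 M2 where y: "b1 = Inr M1" "b2 = Inr M2" "(y1,M1) \<in> I" "(y2,M2) \<in> I"
          using a1 a2 by auto
        then obtain x where N: "v = Inl x" "(x,M1) \<in> I" "(x,M2) \<in> I" using a1 a2
          by (cases v) auto
        have "(x,N) \<notin> I" using ne N Inr by auto
        then show ?thesis using Bun[of x N M1 y1 M2 y2] M y N Inr u v a1 a2 by auto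
      qed
      then show ?thesis using a1 a2 by simp
    qed
    ultimately show ?thesis using exk by (auto simp: chain0 chain1)
  qed
  show ?thesis unfolding generalized_quadrangle_def using inc ex un by blast
qed


locale ctx =
  fixes Pts :: "'p set" and Lns :: "'b set" and Inc :: "('p \<times> 'b) set"
    and G :: "('g, 'm) monoid_scheme" and \<phi> :: "'p \<Rightarrow> 'b \<Rightarrow> 'g"
    and Lam :: "'l set" and act :: "'g \<Rightarrow> 'l \<Rightarrow> 'l"
  assumes lin: "linear_space Pts Lns Inc"
    and grp: "group G"
    and gain: "\<And>p b. (p, b) \<in> Inc \<Longrightarrow> \<phi> p b \<in> carrier G"
    and action: "group_action G Lam act"
    and Lam_ne: "Lam \<noteq> {}"
begin

interpretation G: group G by (rule grp)
interpretation A: group_action G Lam act by (rule action)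

lemma Inc_sub: "(p,b) \<in> Inc \<Longrightarrow> p \<in> Pts \<and> b \<in> Lns"
  using lin unfolding linear_space_def incidence_structure_def by auto

lemma uniq_line: "\<lbrakk>b \<in> Lns; b' \<in> Lns; (p,b) \<in> Inc; (q,b) \<in> Inc; (p,b') \<in> Inc; (q,b') \<in> Inc; p \<noteq> q\<rbrakk>
   \<Longrightarrow> b = b'"
  using lin Inc_sub unfolding linear_space_def by metis

lemma join_ok: assumes "p \<in> Pts" "q \<in> Pts" "p \<noteq> q"
  shows "join Lns Inc p q \<in> Lns \<and> (p, join Lns Inc p q) \<in> Inc \<and> (q, join Lns Inc p q) \<in> Inc"
proof -
  have "\<exists>!b. b \<in> Lns \<and> (p, b) \<in> Inc \<and> (q, b) \<in> Inc" using lin assms unfolding linear_space_def by blast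
  then show ?thesis unfolding join_def by (rule theI')
qed

lemma join_eq: "\<lbrakk>b \<in> Lns; (p,b) \<in> Inc; (q,b) \<in> Inc; p \<noteq> q\<rbrakk> \<Longrightarrow> join Lns Inc p q = b"
  using join_ok[of p q] uniq_line[of b "join Lns Inc p q" p q] Inc_sub by auto

lemma line_two: "b \<in> Lns \<Longrightarrow> \<exists>p q. p \<noteq> q \<and> (p,b) \<in> Inc \<and> (q,b) \<in> Inc"
  using lin unfolding linear_space_def by blast

lemma line_out: assumes b: "b \<in> Lns" shows "\<exists>p\<in>Pts. (p,b) \<notin> Inc"
proof (rule ccontr)
  assume "\<not> ?thesis"
  then have all: "\<And>p. p \<in> Pts \<Longrightarrow> (p,b) \<in> Inc" by blast
  obtain p0 b0 where pb: "p0 \<in> Pts" "b0 \<in> Lns" "(p0,b0) \<notin> Inc" using lin unfolding linear_space_def by blast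
  obtain q1 q2 where q: "q1 \<noteq> q2" "(q1,b0) \<in> Inc" "(q2,b0) \<in> Inc" using line_two[OF pb(2)] by blast
  have "b = b0" using uniq_line[OF b pb(2) all all q(2,3) q(1)] q Inc_sub by blast
  then show False using all[OF pb(1)] pb(3) by simp
qed

lemma act_closed: "g \<in> carrier G \<Longrightarrow> l \<in> Lam \<Longrightarrow> act g l \<in> Lam"
  using A.element_image by blast

lemma act_comp: "g \<in> carrier G \<Longrightarrow> h \<in> carrier G \<Longrightarrow> l \<in> Lam \<Longrightarrow>
   act (g \<otimes>\<^bsub>G\<^esub> h) l = act g (act h l)"
  using A.composition_rule by blast

lemma act_one: "l \<in> Lam \<Longrightarrow> act \<one>\<^bsub>G\<^esub> l = l"
  using fun_cong[OF A.id_eq_one, of l] by simp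

lemma act_inv_l: "g \<in> carrier G \<Longrightarrow> l \<in> Lam \<Longrightarrow> act (inv\<^bsub>G\<^esub> g) (act g l) = l"
  using act_comp[of "inv\<^bsub>G\<^esub> g" g l] act_one by simp

lemma act_inv_r: "g \<in> carrier G \<Longrightarrow> l \<in> Lam \<Longrightarrow> act g (act (inv\<^bsub>G\<^esub> g) l) = l"
  using act_comp[of g "inv\<^bsub>G\<^esub> g" l] act_one by simp

lemma act_inj: "g \<in> carrier G \<Longrightarrow> l \<in> Lam \<Longrightarrow> l' \<in> Lam \<Longrightarrow> act g l = act g l' \<Longrightarrow> l = l'"
  using act_inv_l by metis

lemma rho_c: "(q,b) \<in> Inc \<Longrightarrow> p \<in> Pts \<Longrightarrow> p \<noteq> q \<Longrightarrow> rho G Lns Inc \<phi> b p q \<in> carrier G"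
  unfolding rho_def Let_def using join_ok[of p q] Inc_sub gain by auto

lemma rho_act: assumes "(q,b) \<in> Inc" "p \<in> Pts" "p \<noteq> q" "l \<in> Lam"
  shows "rho_lam G Lns Inc \<phi> act b p l q =
     act (\<phi> p (join Lns Inc p q)) (act (inv\<^bsub>G\<^esub> (\<phi> q (join Lns Inc p q))) (act (\<phi> q b) l))"
  using join_ok[of p q] Inc_sub[of q b] gain assms
  unfolding rho_lam_def rho_def Let_def by (simp add: act_comp act_closed)

abbreviation "MPs \<equiv> M_points Pts Lns Lam"
abbreviation "MLs \<equiv> M_lines Pts Lam"
abbreviation "MIs \<equiv> M_inc Pts Lns Inc Lam \<phi> act"

lemma MP_XP[simp]: "XP p \<in> MPs \<longleftrightarrow> p \<in> Pts" by (auto simp: M_points_def)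
lemma MP_YP[simp]: "YP b l \<in> MPs \<longleftrightarrow> b \<in> Lns \<and> l \<in> Lam" by (auto simp: M_points_def)
lemma MLs_mem[simp]: "(q,\<mu>) \<in> MLs \<longleftrightarrow> q \<in> Pts \<and> \<mu> \<in> Lam" by (auto simp: M_lines_def)
lemma MI_XP[simp]: "(XP p, (q,\<mu>)) \<in> MIs \<longleftrightarrow> p = q \<and> p \<in> Pts \<and> \<mu> \<in> Lam" by (auto simp: M_inc_def)
lemma MI_YP[simp]: "(YP b l, (q,\<mu>)) \<in> MIs \<longleftrightarrow> b \<in> Lns \<and> l \<in> Lam \<and> (q,b) \<in> Inc \<and> \<mu> = act (\<phi> q b) l"
  by (auto simp: M_inc_def)


lemma M_inc_struct: "incidence_structure MPs MLs MIs"
proof -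
  obtain p where p: "p \<in> Pts" using lin unfolding linear_space_def incidence_structure_def by blast
  obtain l where l: "l \<in> Lam" using Lam_ne by blast
  have "MIs \<subseteq> MPs \<times> MLs"
  proof
    fix w assume w: "w \<in> MIs"
    obtain x q \<mu> where wq: "w = (x, (q, \<mu>))" by (cases w) auto
    show "w \<in> MPs \<times> MLs"
    proof (cases x)
      case (XP r) then show ?thesis using w wq by auto
    next
      case (YP b l) then show ?thesis using w wq Inc_sub gain act_closed by auto
    qed
  qed
  moreover have "(XP p, (p, l)) \<in> MIs" using p l by simp
  moreover have "XP p \<in> MPs" "(p,l) \<in> MLs" using p l by auto
  ultimately show ?thesis unfolding incidence_structure_def by blast
qed

lemma M_pl: "x \<in> MPs \<Longrightarrow> \<exists>z\<in>MLs. (x,z) \<in> MIs"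
proof (cases x)
  case (XP p)
  assume "x \<in> MPs"
  obtain l where l: "l \<in> Lam" using Lam_ne by blast
  show ?thesis using XP \<open>x \<in> MPs\<close> l by (intro bexI[of _ "(p,l)"]) auto
next
  case (YP b l)
  assume "x \<in> MPs"
  then have b: "b \<in> Lns" "l \<in> Lam" using YP by auto
  obtain q where q: "(q,b) \<in> Inc" using line_two[OF b(1)] by blast
  show ?thesis using YP b q Inc_sub[OF q] gain[OF q] act_closed
    by (intro bexI[of _ "(q, act (\<phi> q b) l)"]) auto
qed

lemma M_lp: "z \<in> MLs \<Longrightarrow> \<exists>x\<in>MPs. (x,z) \<in> MIs"
  by (cases z) (auto intro!: bexI[of _ "XP (fst z)"])

lemma M_A: assumes "x \<in> MPs" "x' \<in> MPs" "M \<in> MLs" "M' \<in> MLs" "x \<noteq> x'" "(x,M) \<in> MIs" "(x',M) \<in> MIs"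
     "(x,M') \<in> MIs" "(x',M') \<in> MIs"
  shows "M = M'"
proof -
  obtain q \<mu> where M: "M = (q,\<mu>)" by (cases M) auto
  obtain q' \<mu>' where M': "M' = (q',\<mu>')" by (cases M') auto
  show ?thesis
  proof (cases x)
    case (XP p)
    show ?thesis
    proof (cases x')
      case (XP p') then show ?thesis using assms M M' \<open>x = XP p\<close> by auto
    next
      case (YP b l) then show ?thesis using assms M M' \<open>x = XP p\<close> by auto
    qed
  next
    case (YP b l)
    show ?thesis
    proof (cases x')
      case (XP p') then show ?thesis using assms M M' \<open>x = YP b l\<close> by auto
    next
      case (YP b' l')
      have h: "(q,b) \<in> Inc" "(q',b) \<in> Inc" "(q,b') \<in> Inc" "(q',b') \<in> Inc" "b \<in> Lns" "b' \<in> Lns"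
        "l \<in> Lam" "l' \<in> Lam" "\<mu> = act (\<phi> q b) l" "\<mu> = act (\<phi> q b') l'"
        using assms M M' \<open>x = YP b l\<close> YP by auto
      have "q = q'"
      proof (rule ccontr)
        assume ne: "q \<noteq> q'"
        have bb: "b = b'" using uniq_line[OF h(5,6) h(1,2,3,4) ne] .
        then have "l = l'" using act_inj[OF gain[OF h(1)] h(7,8)] h(9,10) by simp
        then show False using assms(5) bb \<open>x = YP b l\<close> YP by simp
      qed
      then show ?thesis using assms M M' \<open>x = YP b l\<close> YP by auto
    qed
  qed
qed

lemma case1_char:
  assumes p: "p \<in> Pts" "p' \<in> Pts" "p \<noteq> p'" "\<mu>' \<in> Lam"
    and c: "M \<in> MLs \<and> y \<in> MPs \<and> (XP p, M) \<in> MIs \<and> (y, M) \<in> MIs \<and> (y, (p',\<mu>')) \<in> MIs"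
  shows "M = (p, act (\<phi> p (join Lns Inc p p')) (act (inv\<^bsub>G\<^esub> (\<phi> p' (join Lns Inc p p'))) \<mu>'))
      \<and> y = YP (join Lns Inc p p') (act (inv\<^bsub>G\<^esub> (\<phi> p' (join Lns Inc p p'))) \<mu>')"
proof -
  obtain q \<mu> where M: "M = (q,\<mu>)" by (cases M) auto
  have q: "q = p" using c M by auto
  show ?thesis
  proof (cases y)
    case (XP r) then show ?thesis using c M q p by auto
  next
    case (YP b l)
    have h: "b \<in> Lns" "l \<in> Lam" "(p,b) \<in> Inc" "(p',b) \<in> Inc" "\<mu> = act (\<phi> p b) l" "\<mu>' = act (\<phi> p' b) l"
      using c M q YP by auto
    have j: "join Lns Inc p p' = b" using join_eq[OF h(1,3,4) p(3)] .
    have "l = act (inv\<^bsub>G\<^esub> (\<phi> p' b)) \<mu>'" using act_inv_l[OF gain[OF h(4)] h(2)] h(6) by simp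
    then show ?thesis using j h M q YP by simp
  qed
qed

lemma case1_ex:
  assumes p: "p \<in> Pts" "p' \<in> Pts" "p \<noteq> p'" "\<mu>' \<in> Lam"
  shows "\<exists>M y. M \<in> MLs \<and> y \<in> MPs \<and> (XP p, M) \<in> MIs \<and> (y, M) \<in> MIs \<and> (y, (p',\<mu>')) \<in> MIs"
proof -
  define b where "b = join Lns Inc p p'"
  have b: "b \<in> Lns" "(p,b) \<in> Inc" "(p',b) \<in> Inc" using join_ok[OF p(1,2,3)] b_def by auto
  define l where "l = act (inv\<^bsub>G\<^esub> (\<phi> p' b)) \<mu>'"
  have l: "l \<in> Lam" using l_def act_closed gain[OF b(3)] p(4) by simp
  have e: "\<mu>' = act (\<phi> p' b) l" using l_def act_inv_r[OF gain[OF b(3)] p(4)] by simp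
  show ?thesis
    using b l e p gain[OF b(2)] act_closed
    by (intro exI[of _ "(p, act (\<phi> p b) l)"] exI[of _ "YP b l"]) auto
qed

lemma case2a_char:
  assumes h: "b \<in> Lns" "l \<in> Lam" "(p',b) \<in> Inc" "\<mu>' \<in> Lam" "\<mu>' \<noteq> act (\<phi> p' b) l"
    and c: "M \<in> MLs \<and> y \<in> MPs \<and> (YP b l, M) \<in> MIs \<and> (y, M) \<in> MIs \<and> (y, (p',\<mu>')) \<in> MIs"
  shows "M = (p', act (\<phi> p' b) l) \<and> y = XP p'"
proof -
  obtain q \<mu> where M: "M = (q,\<mu>)" by (cases M) auto
  have qb: "(q,b) \<in> Inc" "\<mu> = act (\<phi> q b) l" using c M by auto
  show ?thesis
  proof (cases y)
    case (XP r) then show ?thesis using c M qb by auto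
  next
    case (YP b1 l1)
    have h1: "b1 \<in> Lns" "l1 \<in> Lam" "(q,b1) \<in> Inc" "(p',b1) \<in> Inc" "\<mu> = act (\<phi> q b1) l1"
      "\<mu>' = act (\<phi> p' b1) l1"
      using c M YP by auto
    show ?thesis
    proof (cases "q = p'")
      case True then show ?thesis using h h1 qb by simp
    next
      case False
      have "b1 = b" using uniq_line[OF h1(1) h(1) h1(3,4) qb(1) h(3) False] .
      then have "l1 = l" using act_inj[OF gain[OF qb(1)] h1(2) h(2)] h1(5) qb(2) by simp
      then show ?thesis using h h1 \<open>b1 = b\<close> by simp
    qed
  qed
qed

lemma case2b_char:
  assumes h: "b \<in> Lns" "l \<in> Lam" "p' \<in> Pts" "(p',b) \<notin> Inc" "\<mu>' \<in> Lam"
    and c: "M \<in> MLs \<and> y \<in> MPs \<and> (YP b l, M) \<in> MIs \<and> (y, M) \<in> MIs \<and> (y, (p',\<mu>')) \<in> MIs"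
  shows "\<exists>q. (q,b) \<in> Inc \<and> M = (q, act (\<phi> q b) l) \<and>
     y = YP (join Lns Inc p' q) (act (inv\<^bsub>G\<^esub> (\<phi> q (join Lns Inc p' q))) (act (\<phi> q b) l)) \<and>
     rho_lam G Lns Inc \<phi> act b p' l q = \<mu>'"
proof -
  obtain q \<mu> where M: "M = (q,\<mu>)" by (cases M) auto
  have qb: "(q,b) \<in> Inc" "\<mu> = act (\<phi> q b) l" using c M by auto
  have qp: "p' \<noteq> q" using qb h by auto
  show ?thesis
  proof (cases y)
    case (XP r) then show ?thesis using c M qb qp by auto
  next
    case (YP b1 l1)
    have h1: "b1 \<in> Lns" "l1 \<in> Lam" "(q,b1) \<in> Inc" "(p',b1) \<in> Inc" "\<mu> = act (\<phi> q b1) l1"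
      "\<mu>' = act (\<phi> p' b1) l1"
      using c M YP by auto
    have j: "join Lns Inc p' q = b1" using join_eq[OF h1(1,4,3) qp] .
    have l1: "l1 = act (inv\<^bsub>G\<^esub> (\<phi> q b1)) \<mu>" using act_inv_l[OF gain[OF h1(3)] h1(2)] h1(5) by simp
    have "rho_lam G Lns Inc \<phi> act b p' l q = \<mu>'"
      using rho_act[OF qb(1) h(3) qp h(2)] j l1 qb(2) h1(6) by simp
    then show ?thesis using qb M YP j l1 by auto
  qed
qed

lemma case2b_conv:
  assumes h: "b \<in> Lns" "l \<in> Lam" "p' \<in> Pts" "(p',b) \<notin> Inc" "(q,b) \<in> Inc"
  shows "(q, act (\<phi> q b) l) \<in> MLs \<and>
     YP (join Lns Inc p' q) (act (inv\<^bsub>G\<^esub> (\<phi> q (join Lns Inc p' q))) (act (\<phi> q b) l)) \<in> MPs \<and>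
     (YP b l, (q, act (\<phi> q b) l)) \<in> MIs \<and>
     (YP (join Lns Inc p' q) (act (inv\<^bsub>G\<^esub> (\<phi> q (join Lns Inc p' q))) (act (\<phi> q b) l)), (q, act (\<phi> q b) l)) \<in> MIs \<and>
     (YP (join Lns Inc p' q) (act (inv\<^bsub>G\<^esub> (\<phi> q (join Lns Inc p' q))) (act (\<phi> q b) l)),
        (p', rho_lam G Lns Inc \<phi> act b p' l q)) \<in> MIs"
proof -
  have qp: "p' \<noteq> q" using h by auto
  have q: "q \<in> Pts" using Inc_sub[OF h(5)] by simp
  define b1 where "b1 = join Lns Inc p' q"
  have b1: "b1 \<in> Lns" "(p',b1) \<in> Inc" "(q,b1) \<in> Inc" using join_ok[OF h(3) q qp] b1_def by auto
  have m: "act (\<phi> q b) l \<in> Lam" using act_closed gain[OF h(5)] h(2) by simp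
  have l1: "act (inv\<^bsub>G\<^esub> (\<phi> q b1)) (act (\<phi> q b) l) \<in> Lam" using act_closed gain[OF b1(3)] m by simp
  show ?thesis
    using rho_act[OF h(5) h(3) qp h(2)] b1 m l1 h q act_inv_r[OF gain[OF b1(3)] m]
    unfolding b1_def[symmetric] by simp
qed


lemma gq_of_bij:
  assumes bij: "\<forall>p\<in>Pts. \<forall>b\<in>Lns. (p, b) \<notin> Inc \<longrightarrow>
              (\<forall>lm\<in>Lam. bij_betw (rho_lam G Lns Inc \<phi> act b p lm) (pts_on Pts Inc b) Lam)"
  shows "generalized_quadrangle MPs MLs MIs"
proof (rule gq_intro[OF M_inc_struct M_pl M_lp M_A])
  fix x N assume x: "x \<in> MPs" and N: "N \<in> MLs" and nI: "(x,N) \<notin> MIs"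
  obtain p' \<mu>' where N': "N = (p',\<mu>')" by (cases N) auto
  have p': "p' \<in> Pts" "\<mu>' \<in> Lam" using N N' by auto
  show "\<exists>M y. M \<in> MLs \<and> y \<in> MPs \<and> (x, M) \<in> MIs \<and> (y, M) \<in> MIs \<and> (y, N) \<in> MIs"
  proof (cases x)
    case (XP p)
    then show ?thesis using case1_ex[of p p' \<mu>'] x nI N' p' by auto
  next
    case (YP b l)
    have bl: "b \<in> Lns" "l \<in> Lam" using x YP by auto
    show ?thesis
    proof (cases "(p',b) \<in> Inc")
      case True
      have ne: "\<mu>' \<noteq> act (\<phi> p' b) l" using nI N' YP True bl by auto
      show ?thesis using True YP N' bl p' gain[OF True] act_closed
        by (intro exI[of _ "(p', act (\<phi> p' b) l)"] exI[of _ "XP p'"]) auto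
    next
      case False
      have "bij_betw (rho_lam G Lns Inc \<phi> act b p' l) (pts_on Pts Inc b) Lam"
        using bij p' bl False by blast
      then obtain q where q: "q \<in> pts_on Pts Inc b" "rho_lam G Lns Inc \<phi> act b p' l q = \<mu>'"
        using p'(2) unfolding bij_betw_def by force
      have qb: "(q,b) \<in> Inc" using q unfolding pts_on_def by auto
      show ?thesis using case2b_conv[OF bl p'(1) False qb] q(2) YP N' by blast
    qed
  qed
next
  fix x N M y M' y'
  assume x: "x \<in> MPs" and N: "N \<in> MLs" and nI: "(x,N) \<notin> MIs"
    and c1: "M \<in> MLs \<and> y \<in> MPs \<and> (x, M) \<in> MIs \<and> (y, M) \<in> MIs \<and> (y, N) \<in> MIs"
    and c2: "M' \<in> MLs \<and> y' \<in> MPs \<and> (x, M') \<in> MIs \<and> (y', M') \<in> MIs \<and> (y', N) \<in> MIs"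
  obtain p' \<mu>' where N': "N = (p',\<mu>')" by (cases N) auto
  have p': "p' \<in> Pts" "\<mu>' \<in> Lam" using N N' by auto
  show "M = M' \<and> y = y'"
  proof (cases x)
    case (XP p)
    have "p \<noteq> p'" using nI N' p' XP by auto
    then show ?thesis using case1_char[of p p' \<mu>' M y] case1_char[of p p' \<mu>' M' y'] c1 c2 x XP N' p'
      by auto
  next
    case (YP b l)
    have bl: "b \<in> Lns" "l \<in> Lam" using x YP by auto
    show ?thesis
    proof (cases "(p',b) \<in> Inc")
      case True
      have ne: "\<mu>' \<noteq> act (\<phi> p' b) l" using nI N' YP True bl by auto
      show ?thesis using case2a_char[OF bl True p'(2) ne, of M y] case2a_char[OF bl True p'(2) ne, of M' y']
        c1 c2 YP N' by auto
    next
      case False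
      have "bij_betw (rho_lam G Lns Inc \<phi> act b p' l) (pts_on Pts Inc b) Lam"
        using bij p' bl False by blast
      then have inj: "inj_on (rho_lam G Lns Inc \<phi> act b p' l) (pts_on Pts Inc b)"
        unfolding bij_betw_def by blast
      obtain q1 where q1: "(q1,b) \<in> Inc" "M = (q1, act (\<phi> q1 b) l)"
        "y = YP (join Lns Inc p' q1) (act (inv\<^bsub>G\<^esub> (\<phi> q1 (join Lns Inc p' q1))) (act (\<phi> q1 b) l))"
        "rho_lam G Lns Inc \<phi> act b p' l q1 = \<mu>'"
        using case2b_char[OF bl p'(1) False p'(2), of M y] c1 YP N' by blast
      obtain q2 where q2: "(q2,b) \<in> Inc" "M' = (q2, act (\<phi> q2 b) l)"
        "y' = YP (join Lns Inc p' q2) (act (inv\<^bsub>G\<^esub> (\<phi> q2 (join Lns Inc p' q2))) (act (\<phi> q2 b) l))"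
        "rho_lam G Lns Inc \<phi> act b p' l q2 = \<mu>'"
        using case2b_char[OF bl p'(1) False p'(2), of M' y'] c2 YP N' by blast
      have "q1 = q2" using inj_onD[OF inj, of q1 q2] q1 q2 Inc_sub unfolding pts_on_def by auto
      then show ?thesis using q1 q2 by simp
    qed
  qed
qed

lemma bij_of_gq:
  assumes gq: "generalized_quadrangle MPs MLs MIs"
    and h: "p' \<in> Pts" "b \<in> Lns" "(p', b) \<notin> Inc" "l \<in> Lam"
  shows "bij_betw (rho_lam G Lns Inc \<phi> act b p' l) (pts_on Pts Inc b) Lam"
  unfolding bij_betw_def
proof (intro conjI)
  show "inj_on (rho_lam G Lns Inc \<phi> act b p' l) (pts_on Pts Inc b)"
  proof (rule inj_onI)
    fix q1 q2 assume q1: "q1 \<in> pts_on Pts Inc b" and q2: "q2 \<in> pts_on Pts Inc b"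
      and eq: "rho_lam G Lns Inc \<phi> act b p' l q1 = rho_lam G Lns Inc \<phi> act b p' l q2"
    have i1: "(q1,b) \<in> Inc" and i2: "(q2,b) \<in> Inc" using q1 q2 unfolding pts_on_def by auto
    define \<mu>' where "\<mu>' = rho_lam G Lns Inc \<phi> act b p' l q1"
    have m: "\<mu>' \<in> Lam" unfolding \<mu>'_def rho_lam_def
      using act_closed rho_c[OF i1 h(1)] i1 h by auto
    have nI: "(YP b l, (p', \<mu>')) \<notin> MIs" using h by simp
    define Y1 :: "('p,'b,'l) mpoint" where "Y1 = YP (join Lns Inc p' q1) (act (inv\<^bsub>G\<^esub> (\<phi> q1 (join Lns Inc p' q1))) (act (\<phi> q1 b) l))"
    define Y2 :: "('p,'b,'l) mpoint" where "Y2 = YP (join Lns Inc p' q2) (act (inv\<^bsub>G\<^esub> (\<phi> q2 (join Lns Inc p' q2))) (act (\<phi> q2 b) l))"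
    have c1: "(q1, act (\<phi> q1 b) l) \<in> MLs \<and> Y1 \<in> MPs \<and> (YP b l, (q1, act (\<phi> q1 b) l)) \<in> MIs \<and>
       (Y1, (q1, act (\<phi> q1 b) l)) \<in> MIs \<and> (Y1, (p', \<mu>')) \<in> MIs"
      using case2b_conv[OF h(2,4,1,3) i1] unfolding Y1_def \<mu>'_def by blast
    have c2: "(q2, act (\<phi> q2 b) l) \<in> MLs \<and> Y2 \<in> MPs \<and> (YP b l, (q2, act (\<phi> q2 b) l)) \<in> MIs \<and>
       (Y2, (q2, act (\<phi> q2 b) l)) \<in> MIs \<and> (Y2, (p', \<mu>')) \<in> MIs"
      using case2b_conv[OF h(2,4,1,3) i2] eq unfolding Y2_def \<mu>'_def by simp
    have xP: "YP b l \<in> MPs" and NL: "(p', \<mu>') \<in> MLs" using h m by auto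
    show "q1 = q2"
      using gq_B(2)[OF gq xP NL nI c1 c2] by simp
  qed
next
  show "rho_lam G Lns Inc \<phi> act b p' l ` pts_on Pts Inc b = Lam"
  proof
    show "rho_lam G Lns Inc \<phi> act b p' l ` pts_on Pts Inc b \<subseteq> Lam"
      unfolding rho_lam_def pts_on_def using h by (auto intro!: act_closed rho_c)
    show "Lam \<subseteq> rho_lam G Lns Inc \<phi> act b p' l ` pts_on Pts Inc b"
    proof
      fix \<mu>' assume m: "\<mu>' \<in> Lam"
      have nI: "(YP b l, (p', \<mu>')) \<notin> MIs" using h by simp
      obtain M y where c: "M \<in> MLs \<and> y \<in> MPs \<and> (YP b l, M) \<in> MIs \<and> (y, M) \<in> MIs \<and> (y, (p',\<mu>')) \<in> MIs"
        using gq_B(1)[OF gq _ _ nI] h m by auto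
      obtain q where "(q,b) \<in> Inc" "rho_lam G Lns Inc \<phi> act b p' l q = \<mu>'"
        using case2b_char[OF h(2,4,1,3) m c] by blast
      then show "\<mu>' \<in> rho_lam G Lns Inc \<phi> act b p' l ` pts_on Pts Inc b"
        using Inc_sub unfolding pts_on_def by force
    qed
  qed
qed


lemma Lp_count:
  assumes fin: "finite Pts" and kk: "\<And>b. b \<in> Lns \<Longrightarrow> card (pts_on Pts Inc b) = k" and k2: "k \<ge> 2"
    and p: "p \<in> Pts"
  shows "finite {b \<in> Lns. (p,b) \<in> Inc}"
    and "real (card {b \<in> Lns. (p,b) \<in> Inc}) = (real (card Pts) - 1) / (real k - 1)"
proof -
  let ?Lp = "{b \<in> Lns. (p,b) \<in> Inc}"
  have sub: "?Lp \<subseteq> (\<lambda>q. join Lns Inc p q) ` (Pts - {p})"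
  proof
    fix b assume b: "b \<in> ?Lp"
    obtain q1 q2 where q: "q1 \<noteq> q2" "(q1,b) \<in> Inc" "(q2,b) \<in> Inc" using line_two b by blast
    obtain q where q': "q \<noteq> p" "(q,b) \<in> Inc" using q by (cases "q1 = p") (auto dest: sym)
    have "join Lns Inc p q = b" using join_eq[of b p q] b q' by auto
    then show "b \<in> (\<lambda>q. join Lns Inc p q) ` (Pts - {p})" using q' Inc_sub by force
  qed
  show finLp: "finite ?Lp" using finite_subset[OF sub] fin by blast
  define A where "A b = pts_on Pts Inc b - {p}" for b
  have U: "Pts - {p} = (\<Union>b\<in>?Lp. A b)"
  proof
    show "Pts - {p} \<subseteq> (\<Union>b\<in>?Lp. A b)"
    proof
      fix q assume q: "q \<in> Pts - {p}"
      then have "join Lns Inc p q \<in> ?Lp \<and> q \<in> A (join Lns Inc p q)"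
        using join_ok[of p q] p unfolding A_def pts_on_def by auto
      then show "q \<in> (\<Union>b\<in>?Lp. A b)" by blast
    qed
    show "(\<Union>b\<in>?Lp. A b) \<subseteq> Pts - {p}" unfolding A_def pts_on_def by auto
  qed
  have disj: "\<forall>b\<in>?Lp. \<forall>b'\<in>?Lp. b \<noteq> b' \<longrightarrow> A b \<inter> A b' = {}"
  proof (intro ballI impI)
    fix b b' assume b: "b \<in> ?Lp" "b' \<in> ?Lp" "b \<noteq> b'"
    show "A b \<inter> A b' = {}"
    proof (rule ccontr)
      assume "A b \<inter> A b' \<noteq> {}"
      then obtain q where q: "q \<noteq> p" "(q,b) \<in> Inc" "(q,b') \<in> Inc" unfolding A_def pts_on_def by auto
      have "b = b'" using uniq_line[of b b' p q] b q by auto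
      then show False using b by simp
    qed
  qed
  have cA: "card (A b) = k - 1" if "b \<in> ?Lp" for b
    using that kk[of b] p unfolding A_def pts_on_def by (simp add: card_Diff_singleton_if)
  have finA: "finite (A b)" for b unfolding A_def pts_on_def using fin by auto
  have c1: "card (Pts - {p}) = (\<Sum>b\<in>?Lp. card (A b))"
    using card_UN_disjoint[OF finLp _ disj] finA unfolding U by blast
  have c2: "(\<Sum>b\<in>?Lp. card (A b)) = (\<Sum>b\<in>?Lp. k - 1)"
    by (rule sum.cong[OF refl]) (rule cA)
  have c3: "card (Pts - {p}) = card Pts - 1" using p fin by (simp add: card_Diff_singleton)
  have e: "card Pts - 1 = card ?Lp * (k - 1)" using c1 c2 c3 by simp
  have v0: "card Pts > 0" using p fin by (auto simp: card_gt_0_iff)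
  then have v1: "card Pts \<ge> 1" by simp
  have r1: "real (card Pts - 1) = real (card Pts) - 1" using v1 by (simp add: of_nat_diff)
  have r2: "real (k - 1) = real k - 1" using k2 by (simp add: of_nat_diff)
  have "real (card Pts) - 1 = real (card ?Lp) * (real k - 1)"
    using arg_cong[OF e, of real] r1 r2 by simp
  then show "real (card ?Lp) = (real (card Pts) - 1) / (real k - 1)"
    using k2 by (simp add: field_simps)
qed

lemma line_pts:
  assumes p: "p \<in> Pts" and m: "\<mu> \<in> Lam"
  shows "{x \<in> MPs. (x, (p,\<mu>)) \<in> MIs} =
     insert (XP p) ((\<lambda>b. YP b (act (inv\<^bsub>G\<^esub> (\<phi> p b)) \<mu>)) ` {b \<in> Lns. (p,b) \<in> Inc})"
proof
  show "{x \<in> MPs. (x, (p,\<mu>)) \<in> MIs} \<subseteq>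
     insert (XP p) ((\<lambda>b. YP b (act (inv\<^bsub>G\<^esub> (\<phi> p b)) \<mu>)) ` {b \<in> Lns. (p,b) \<in> Inc})"
  proof
    fix x assume x: "x \<in> {x \<in> MPs. (x, (p,\<mu>)) \<in> MIs}"
    show "x \<in> insert (XP p) ((\<lambda>b. YP b (act (inv\<^bsub>G\<^esub> (\<phi> p b)) \<mu>)) ` {b \<in> Lns. (p,b) \<in> Inc})"
    proof (cases x)
      case (XP r) then show ?thesis using x by auto
    next
      case (YP b l)
      then have h: "b \<in> Lns" "l \<in> Lam" "(p,b) \<in> Inc" "\<mu> = act (\<phi> p b) l" using x by auto
      then have "l = act (inv\<^bsub>G\<^esub> (\<phi> p b)) \<mu>" using act_inv_l[OF gain[OF h(3)] h(2)] by simp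
      then show ?thesis using YP h by auto
    qed
  qed
  show "insert (XP p) ((\<lambda>b. YP b (act (inv\<^bsub>G\<^esub> (\<phi> p b)) \<mu>)) ` {b \<in> Lns. (p,b) \<in> Inc})
     \<subseteq> {x \<in> MPs. (x, (p,\<mu>)) \<in> MIs}"
  proof
    fix x assume "x \<in> insert (XP p) ((\<lambda>b. YP b (act (inv\<^bsub>G\<^esub> (\<phi> p b)) \<mu>)) ` {b \<in> Lns. (p,b) \<in> Inc})"
    then consider "x = XP p" | b where "b \<in> Lns" "(p,b) \<in> Inc" "x = YP b (act (inv\<^bsub>G\<^esub> (\<phi> p b)) \<mu>)"
      by auto
    then show "x \<in> {x \<in> MPs. (x, (p,\<mu>)) \<in> MIs}"
    proof cases
      case 1 then show ?thesis using p m by simp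
    next
      case (2 b)
      have g: "inv\<^bsub>G\<^esub> (\<phi> p b) \<in> carrier G" using gain[OF 2(2)] by simp
      show ?thesis using 2 act_closed[OF g m] act_inv_r[OF gain[OF 2(2)] m] by simp
    qed
  qed
qed

lemma point_lines_XP:
  assumes p: "p \<in> Pts"
  shows "{z \<in> MLs. (XP p, z) \<in> MIs} = {p} \<times> Lam"
  using p by auto

lemma point_lines_YP:
  assumes b: "b \<in> Lns" "l \<in> Lam"
  shows "{z \<in> MLs. (YP b l, z) \<in> MIs} = (\<lambda>q. (q, act (\<phi> q b) l)) ` pts_on Pts Inc b"
proof
  show "{z \<in> MLs. (YP b l, z) \<in> MIs} \<subseteq> (\<lambda>q. (q, act (\<phi> q b) l)) ` pts_on Pts Inc b"
  proof
    fix z assume z: "z \<in> {z \<in> MLs. (YP b l, z) \<in> MIs}"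
    obtain q \<mu> where zq: "z = (q,\<mu>)" by (cases z) auto
    have "(q,b) \<in> Inc" "\<mu> = act (\<phi> q b) l" using z zq by auto
    then show "z \<in> (\<lambda>q. (q, act (\<phi> q b) l)) ` pts_on Pts Inc b"
      using zq Inc_sub unfolding pts_on_def by auto
  qed
  show "(\<lambda>q. (q, act (\<phi> q b) l)) ` pts_on Pts Inc b \<subseteq> {z \<in> MLs. (YP b l, z) \<in> MIs}"
  proof
    fix z assume "z \<in> (\<lambda>q. (q, act (\<phi> q b) l)) ` pts_on Pts Inc b"
    then obtain q where q: "(q,b) \<in> Inc" "z = (q, act (\<phi> q b) l)" unfolding pts_on_def by auto
    show "z \<in> {z \<in> MLs. (YP b l, z) \<in> MIs}"
      using q b Inc_sub[OF q(1)] act_closed[OF gain[OF q(1)] b(2)] by simp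
  qed
qed


lemma main:
  "(generalized_quadrangle MPs MLs MIs \<longleftrightarrow>
           (\<forall>p\<in>Pts. \<forall>b\<in>Lns. (p, b) \<notin> Inc \<longrightarrow>
              (\<forall>lm\<in>Lam. bij_betw (rho_lam G Lns Inc \<phi> act b p lm) (pts_on Pts Inc b) Lam)))
         \<and> (generalized_quadrangle MPs MLs MIs \<longrightarrow>
           ovoid MPs MLs MIs (XP ` Pts)
         \<and> (\<forall>b\<in>Lns. pts_on Pts Inc b \<approx> Lam)
         \<and> steiner_system Pts Lns Inc
         \<and> (finite Pts \<longrightarrow>
              finite Lam \<and> card Pts \<ge> 3 \<and> card Lam \<ge> 2 \<and>
              (\<forall>z\<in>MLs. finite {x\<in>MPs. (x, z) \<in> MIs} \<and>
                 real (card {x\<in>MPs. (x, z) \<in> MIs})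
                   = 1 + (real (card Pts) - 1) / (real (card Lam) - 1)) \<and>
              (\<forall>x\<in>MPs. finite {z\<in>MLs. (x, z) \<in> MIs} \<and>
                 card {z\<in>MLs. (x, z) \<in> MIs} = 1 + (card Lam - 1))))"
proof (intro conjI impI)
  show "generalized_quadrangle MPs MLs MIs \<longleftrightarrow>
           (\<forall>p\<in>Pts. \<forall>b\<in>Lns. (p, b) \<notin> Inc \<longrightarrow>
              (\<forall>lm\<in>Lam. bij_betw (rho_lam G Lns Inc \<phi> act b p lm) (pts_on Pts Inc b) Lam))"
    using gq_of_bij bij_of_gq by blast
next
  assume gq: "generalized_quadrangle MPs MLs MIs"
  show "ovoid MPs MLs MIs (XP ` Pts)"
    unfolding ovoid_def
  proof (intro conjI ballI)
    show "XP ` Pts \<subseteq> MPs" by auto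
    fix z assume z: "z \<in> MLs"
    obtain q \<mu> where zq: "z = (q,\<mu>)" by (cases z) auto
    show "\<exists>!x. x \<in> XP ` Pts \<and> (x, z) \<in> MIs"
    proof (rule ex1I[of _ "XP q"])
      show "XP q \<in> XP ` Pts \<and> (XP q, z) \<in> MIs" using z zq by auto
      fix x assume "x \<in> XP ` Pts \<and> (x, z) \<in> MIs"
      then show "x = XP q" using zq by auto
    qed
  qed
  show eq: "\<forall>b\<in>Lns. pts_on Pts Inc b \<approx> Lam"
  proof
    fix b assume b: "b \<in> Lns"
    obtain p where p: "p \<in> Pts" "(p,b) \<notin> Inc" using line_out[OF b] by blast
    obtain l where l: "l \<in> Lam" using Lam_ne by blast
    show "pts_on Pts Inc b \<approx> Lam" using bij_of_gq[OF gq p(1) b p(2) l] unfolding eqpoll_def by blast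
  qed
  show "steiner_system Pts Lns Inc"
    unfolding steiner_system_def using lin eq eqpoll_trans eqpoll_sym by blast
  assume fin: "finite Pts"
  obtain b0 where b0: "b0 \<in> Lns" using lin unfolding linear_space_def incidence_structure_def by blast
  have finPb: "finite (pts_on Pts Inc b)" for b using fin unfolding pts_on_def by auto
  show finLam: "finite Lam" using eqpoll_finite_iff[OF eq[rule_format, OF b0]] finPb by blast
  have kk: "card (pts_on Pts Inc b) = card Lam" if "b \<in> Lns" for b
    using eqpoll_iff_card[OF finPb finLam] eq that by blast
  obtain q1 q2 where q: "q1 \<noteq> q2" "(q1,b0) \<in> Inc" "(q2,b0) \<in> Inc" using line_two[OF b0] by blast
  obtain p0 where p0: "p0 \<in> Pts" "(p0,b0) \<notin> Inc" using line_out[OF b0] by blast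
  have "{q1,q2} \<subseteq> pts_on Pts Inc b0" using q Inc_sub unfolding pts_on_def by auto
  then have "card {q1,q2} \<le> card (pts_on Pts Inc b0)" using card_mono finPb by blast
  then show k2: "card Lam \<ge> 2" using kk[OF b0] q(1) by simp
  have "{p0,q1,q2} \<subseteq> Pts" using q p0 Inc_sub by auto
  then have "card {p0,q1,q2} \<le> card Pts" using card_mono fin by blast
  moreover have "p0 \<noteq> q1" "p0 \<noteq> q2" using p0 q by auto
  ultimately show "card Pts \<ge> 3" using q(1) by simp
  show "\<forall>z\<in>MLs. finite {x\<in>MPs. (x, z) \<in> MIs} \<and>
                 real (card {x\<in>MPs. (x, z) \<in> MIs})
                   = 1 + (real (card Pts) - 1) / (real (card Lam) - 1)"
  proof
    fix z assume z: "z \<in> MLs"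
    obtain p \<mu> where zq: "z = (p,\<mu>)" by (cases z) auto
    have pm: "p \<in> Pts" "\<mu> \<in> Lam" using z zq by auto
    let ?Lp = "{b \<in> Lns. (p,b) \<in> Inc}"
    let ?f = "\<lambda>b. YP b (act (inv\<^bsub>G\<^esub> (\<phi> p b)) \<mu>) :: ('p,'b,'l) mpoint"
    have finLp: "finite ?Lp" using Lp_count(1)[OF fin kk k2 pm(1)] by blast
    have inj: "inj_on ?f ?Lp" by (rule inj_onI) simp
    have nin: "XP p \<notin> ?f ` ?Lp" by auto
    have S: "{x\<in>MPs. (x, z) \<in> MIs} = insert (XP p) (?f ` ?Lp)" using line_pts[OF pm] zq by simp
    have "card {x\<in>MPs. (x, z) \<in> MIs} = Suc (card ?Lp)"
      unfolding S using card_insert_disjoint[OF finite_imageI[OF finLp] nin] card_image[OF inj] by simp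
    then show "finite {x\<in>MPs. (x, z) \<in> MIs} \<and>
                 real (card {x\<in>MPs. (x, z) \<in> MIs})
                   = 1 + (real (card Pts) - 1) / (real (card Lam) - 1)"
      using S finLp Lp_count(2)[OF fin kk k2 pm(1)] by simp
  qed
  show "\<forall>x\<in>MPs. finite {z\<in>MLs. (x, z) \<in> MIs} \<and>
                 card {z\<in>MLs. (x, z) \<in> MIs} = 1 + (card Lam - 1)"
  proof
    fix x assume x: "x \<in> MPs"
    show "finite {z\<in>MLs. (x, z) \<in> MIs} \<and> card {z\<in>MLs. (x, z) \<in> MIs} = 1 + (card Lam - 1)"
    proof (cases x)
      case (XP p)
      have p: "p \<in> Pts" using x XP by simp
      show ?thesis using point_lines_XP[OF p] XP finLam k2 by (simp add: card_cartesian_product_singleton)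
    next
      case (YP b l)
      have bl: "b \<in> Lns" "l \<in> Lam" using x YP by auto
      have inj: "inj_on (\<lambda>q. (q, act (\<phi> q b) l)) (pts_on Pts Inc b)" by (rule inj_onI) simp
      show ?thesis using point_lines_YP[OF bl] YP card_image[OF inj] kk[OF bl(1)] finPb k2 by simp
    qed
  qed
qed

end

theorem theorem5:
  fixes Pts :: "'p set" and Lns :: "'b set" and Inc :: "('p \<times> 'b) set"
    and G :: "('g, 'm) monoid_scheme" and \<phi> :: "'p \<Rightarrow> 'b \<Rightarrow> 'g"
    and Lam :: "'l set" and act :: "'g \<Rightarrow> 'l \<Rightarrow> 'l"
  assumes lin: "linear_space Pts Lns Inc"
    and grp: "group G"
    and gain: "\<And>p b. (p, b) \<in> Inc \<Longrightarrow> \<phi> p b \<in> carrier G"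
    and action: "group_action G Lam act"
    and Lam_ne: "Lam \<noteq> {}"
  defines "MP \<equiv> M_points Pts Lns Lam"
    and "ML \<equiv> M_lines Pts Lam"
    and "MI \<equiv> M_inc Pts Lns Inc Lam \<phi> act"
  shows "(generalized_quadrangle MP ML MI \<longleftrightarrow>
           (\<forall>p\<in>Pts. \<forall>b\<in>Lns. (p, b) \<notin> Inc \<longrightarrow>
              (\<forall>lm\<in>Lam. bij_betw (rho_lam G Lns Inc \<phi> act b p lm) (pts_on Pts Inc b) Lam)))
         \<and> (generalized_quadrangle MP ML MI \<longrightarrow>
           ovoid MP ML MI (XP ` Pts)
         \<and> (\<forall>b\<in>Lns. pts_on Pts Inc b \<approx> Lam)
         \<and> steiner_system Pts Lns Inc
         \<and> (finite Pts \<longrightarrow>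
              finite Lam \<and> card Pts \<ge> 3 \<and> card Lam \<ge> 2 \<and>
              (\<forall>z\<in>ML. finite {x\<in>MP. (x, z) \<in> MI} \<and>
                 real (card {x\<in>MP. (x, z) \<in> MI})
                   = 1 + (real (card Pts) - 1) / (real (card Lam) - 1)) \<and>
              (\<forall>x\<in>MP. finite {z\<in>ML. (x, z) \<in> MI} \<and>
                 card {z\<in>ML. (x, z) \<in> MI} = 1 + (card Lam - 1))))"
proof -
  interpret ctx Pts Lns Inc G \<phi> Lam act
    by (rule ctx.intro[OF lin grp gain action Lam_ne])
  show ?thesis unfolding assms(6) assms(7) assms(8) by (rule main)
qed

end
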